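(* Let $P$ be a locally finite poset, $R$ a commutative unital ring, and $n\ge 3$. Then $I^n(P,R)$ is not third power associative (i.e. there exists $f\in I^n(P,R)$ with $f(ff)\ne (ff)f$), unless $P$ is an antichain.
   Context: For a poset $P$ and $n\ge 2$, $P^n_\le=\{(x_1,\dots,x_n)\in P^n: x_1\le\dots\le x_n\}$. For $\mathbf{x}=(x_1,\dots,x_n)\in P^n_\le$, $\mathcal{I}(\mathbf{x})=[x_1,x_2]\times\dots\times[x_{n-1},x_n]\subseteq P^{n-1}_\le$, where $[a,b]=\{c\in P: a\le c\le b\}$. The $n$-th partial flag incidence algebra $I^n(P,R)$ is the $R$-module of functions $f:P^n_\le\to R$ with multiplication $(fg)(\mathbf{x})=\sum_{\mathbf{y}\in\mathcal{I}(\mathbf{x})}f(x_1,\mathbf{y})g(\mathbf{y},x_n)$. *)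

theory Defs
  imports Main
begin

text \<open>A poset is modelled as a type of class order. Elements of P^n_le are
lists of length n that are weakly increasing.\<close>

definition locally_finite :: "'a::order itself \<Rightarrow> bool" where
  "locally_finite _ \<longleftrightarrow> (\<forall>a b::'a. finite {c. a \<le> c \<and> c \<le> b})"

definition is_antichain :: "'a::order itself \<Rightarrow> bool" where
  "is_antichain _ \<longleftrightarrow> (\<forall>a b::'a. a \<le> b \<longrightarrow> a = b)"

definition flags :: "nat \<Rightarrow> ('a::order) list set" where
  "flags n = {xs. length xs = n \<and> sorted_wrt (\<le>) xs}"

definition Icube :: "('a::order) list \<Rightarrow> 'a list set" where
  "Icube xs = {ys. length ys = length xs - 1 \<and>
     (\<forall>i < length ys. xs ! i \<le> ys ! i \<and> ys ! i \<le> xs ! Suc i)}"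

definition pfia :: "nat \<Rightarrow> (('a::order) list \<Rightarrow> 'r::comm_ring_1) set" where
  "pfia n = {f. \<forall>xs. xs \<notin> flags n \<longrightarrow> f xs = 0}"

definition pf_mult :: "nat \<Rightarrow> (('a::order) list \<Rightarrow> 'r::comm_ring_1) \<Rightarrow> ('a list \<Rightarrow> 'r) \<Rightarrow> 'a list \<Rightarrow> 'r" where
  "pf_mult n f g = (\<lambda>xs. if xs \<in> flags n
      then (\<Sum>ys\<in>Icube xs. f (hd xs # ys) * g (ys @ [last xs])) else 0)"

end

theory Submission
  imports Defs
begin

definition wd :: "'a \<Rightarrow> 'a \<Rightarrow> nat \<Rightarrow> nat \<Rightarrow> 'a list" where
  "wd a b n j = map (\<lambda>k. if k < j then a else b) [0..<n]"

lemma wd_len[simp]: "length (wd a b n j) = n"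
  by (simp add: wd_def)

lemma wd_nth: "k < n \<Longrightarrow> wd a b n j ! k = (if k < j then a else b)"
  by (simp add: wd_def)

lemma wd_flags: "(a::'a::order) < b \<Longrightarrow> wd a b n j \<in> flags n"
  unfolding flags_def sorted_wrt_iff_nth_less
  by (auto simp: wd_nth less_imp_le)

lemma finite_Icube:
  assumes "locally_finite TYPE('a::order)"
  shows "finite (Icube (xs::'a list))"
proof -
  define A where "A = (\<Union>i<length xs. {c. xs ! i \<le> c \<and> c \<le> xs ! Suc i})"
  have fA: "finite A" using assms unfolding A_def locally_finite_def by auto
  have "Icube xs \<subseteq> {ys. set ys \<subseteq> A \<and> length ys = length xs - 1}"
  proof
    fix ys assume "ys \<in> Icube xs"
    then have l: "length ys = length xs - 1"
      and c: "\<forall>i<length ys. xs ! i \<le> ys ! i \<and> ys ! i \<le> xs ! Suc i"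
      by (auto simp: Icube_def)
    have "set ys \<subseteq> A"
    proof
      fix x assume "x \<in> set ys"
      then obtain i where "i < length ys" "ys ! i = x" by (auto simp: in_set_conv_nth)
      then show "x \<in> A" using c l unfolding A_def by force
    qed
    then show "ys \<in> {ys. set ys \<subseteq> A \<and> length ys = length xs - 1}" using l by auto
  qed
  then show ?thesis using finite_lists_length_eq[OF fA] finite_subset by blast
qed


lemma key:
  fixes f g :: "'a::order list \<Rightarrow> 'r::comm_ring_1"
  assumes lf: "locally_finite TYPE('a)" and ab: "a < b" and i1: "1 \<le> i" and i2: "i < n"
    and supp: "(\<forall>xs. f xs \<noteq> 0 \<longrightarrow> (\<exists>j. xs = wd a b n j)) \<or> (\<forall>xs. g xs \<noteq> 0 \<longrightarrow> (\<exists>j. xs = wd a b n j))"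
  shows "pf_mult n f g (wd a b n i) = f (wd a b n (Suc i)) * g (wd a b n i) + f (wd a b n i) * g (wd a b n (i-1))"
proof -
  define u1 where "u1 = map (\<lambda>k. if k < i then a else b) [0..<n-1]"
  define u2 where "u2 = map (\<lambda>k. if k < i-1 then a else b) [0..<n-1]"
  have ab': "a \<le> b" "a \<noteq> b" "\<not> b \<le> a" using ab by auto
  have hd: "hd (wd a b n i) = a"
  proof -
    have "wd a b n i \<noteq> []" using i2 by (metis wd_len less_zeroE list.size(3))
    then show ?thesis using i1 i2 by (simp add: hd_conv_nth wd_nth)
  qed
  have lst: "last (wd a b n i) = b"
  proof -
    have "wd a b n i \<noteq> []" using i2 by (metis wd_len less_zeroE list.size(3))
    then show ?thesis using i2 by (auto simp: last_conv_nth wd_nth)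
  qed
  have e1: "a # u1 = wd a b n (Suc i)"
    by (rule nth_equalityI) (use i2 in \<open>auto simp: u1_def wd_nth nth_Cons split: nat.split\<close>)
  have e2: "u1 @ [b] = wd a b n i"
    by (rule nth_equalityI) (use i2 in \<open>auto simp: u1_def wd_nth nth_append\<close>)
  have e3: "a # u2 = wd a b n i"
    by (rule nth_equalityI) (use i1 i2 in \<open>auto simp: u2_def wd_nth nth_Cons split: nat.split\<close>)
  have e4: "u2 @ [b] = wd a b n (i-1)"
    by (rule nth_equalityI) (use i1 i2 in \<open>auto simp: u2_def wd_nth nth_append\<close>)
  have neq: "u1 \<noteq> u2"
  proof
    assume "u1 = u2"
    then have "u1 ! (i-1) = u2 ! (i-1)" by simp
    then show False using i1 i2 ab' by (simp add: u1_def u2_def)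
  qed
  have in1: "u1 \<in> Icube (wd a b n i)"
    using i1 i2 ab' by (auto simp: Icube_def u1_def wd_nth)
  have in2: "u2 \<in> Icube (wd a b n i)"
    using i1 i2 ab' by (auto simp: Icube_def u2_def wd_nth)
  have other: "f (a # ys) * g (ys @ [b]) = 0"
    if ys: "ys \<in> Icube (wd a b n i)" "ys \<notin> {u1, u2}" for ys
  proof (rule ccontr)
    assume nz: "f (a # ys) * g (ys @ [b]) \<noteq> 0"
    have ly: "length ys = n - 1" using ys by (simp add: Icube_def)
    have c: "\<And>k. k < n - 1 \<Longrightarrow> (if k < i then a else b) \<le> ys ! k \<and> ys ! k \<le> (if Suc k < i then a else b)"
      using ys i2 by (auto simp: Icube_def wd_nth)
    from supp show False
    proof
      assume s: "\<forall>xs. f xs \<noteq> 0 \<longrightarrow> (\<exists>j. xs = wd a b n j)"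
      have "f (a # ys) \<noteq> 0" using nz by auto
      then obtain j where j: "a # ys = wd a b n j" using s by blast
      have yk: "ys ! k = (if Suc k < j then a else b)" if "k < n - 1" for k
      proof -
        have "(a # ys) ! Suc k = wd a b n j ! Suc k" using j by simp
        then show ?thesis using that i2 by (simp add: wd_nth)
      qed
      have "(a # ys) ! 0 = wd a b n j ! 0" using j by simp
      then have j0: "0 < j" using i2 ab' by (auto simp: wd_nth split: if_splits)
      consider "j < i" | "j = i" | "j = Suc i" | "Suc i < j" by linarith
      then show False
      proof cases
        case 1
        have "j - 1 < n - 1" using 1 i2 j0 by linarith
        then show False using c[of "j-1"] yk[of "j-1"] j0 1 ab' by auto
      next
        case 2
        have "ys = u2" by (rule nth_equalityI) (use ly yk 2 i1 in \<open>auto simp: u2_def\<close>)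
        then show False using ys by auto
      next
        case 3
        have "ys = u1" by (rule nth_equalityI) (use ly yk 3 in \<open>auto simp: u1_def\<close>)
        then show False using ys by auto
      next
        case 4
        show False
        proof (cases "i < n - 1")
          case True
          then show False using c[of i] yk[of i] 4 ab' by auto
        next
          case False
          have "ys = u1" by (rule nth_equalityI) (use ly yk 4 False in \<open>auto simp: u1_def\<close>)
          then show False using ys by auto
        qed
      qed
    next
      assume s: "\<forall>xs. g xs \<noteq> 0 \<longrightarrow> (\<exists>j. xs = wd a b n j)"
      have "g (ys @ [b]) \<noteq> 0" using nz by auto
      then obtain j where j: "ys @ [b] = wd a b n j" using s by blast
      have yk: "ys ! k = (if k < j then a else b)" if "k < n - 1" for k
      proof -
        have "(ys @ [b]) ! k = wd a b n j ! k" using j by simp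
        then show ?thesis using that i2 ly by (simp add: wd_nth nth_append)
      qed
      have "(ys @ [b]) ! (n-1) = wd a b n j ! (n-1)" using j by simp
      then have jn: "j < n" using i2 ab' ly by (auto simp: wd_nth nth_append split: if_splits)
      consider "Suc j < i" | "Suc j = i" | "j = i" | "i < j" by linarith
      then show False
      proof cases
        case 1
        have "j < n - 1" using 1 i2 by linarith
        then show False using c[of j] yk[of j] 1 ab' by auto
      next
        case 2
        have "ys = u2" by (rule nth_equalityI) (use ly yk 2 i1 in \<open>auto simp: u2_def\<close>)
        then show False using ys by auto
      next
        case 3
        have "ys = u1" by (rule nth_equalityI) (use ly yk 3 in \<open>auto simp: u1_def\<close>)
        then show False using ys by auto
      next
        case 4
        have "i < n - 1" using 4 jn by linarith
        then show False using c[of i] yk[of i] 4 ab' by auto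
      qed
    qed
  qed
  have "pf_mult n f g (wd a b n i) = (\<Sum>ys\<in>Icube (wd a b n i). f (a # ys) * g (ys @ [b]))"
    using ab by (simp add: pf_mult_def wd_flags hd lst)
  also have "\<dots> = (\<Sum>ys\<in>{u1, u2}. f (a # ys) * g (ys @ [b]))"
    by (rule sum.mono_neutral_right) (use finite_Icube[OF lf] in1 in2 other in auto)
  also have "\<dots> = f (wd a b n (Suc i)) * g (wd a b n i) + f (wd a b n i) * g (wd a b n (i-1))"
    using neq by (simp add: e1 e2 e3 e4)
  finally show ?thesis .
qed


lemma anti_mult:
  fixes f g :: "'a::order list \<Rightarrow> 'r::comm_ring_1"
  assumes anti: "is_antichain TYPE('a)" and n1: "1 \<le> n"
  shows "pf_mult n f g = (\<lambda>xs. if xs \<in> flags n then f xs * g xs else 0)"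
proof (rule ext)
  fix xs :: "'a list"
  show "pf_mult n f g xs = (if xs \<in> flags n then f xs * g xs else 0)"
  proof (cases "xs \<in> flags n")
    case False then show ?thesis by (simp add: pf_mult_def)
  next
    case True
    have len: "length xs = n" and srt: "sorted_wrt (\<le>) xs" using True by (auto simp: flags_def)
    have ant: "\<And>x y::'a. x \<le> y \<Longrightarrow> x = y" using anti by (auto simp: is_antichain_def)
    have lt: "xs ! i = xs ! j" if "i < j" "j < n" for i j
    proof -
      have "xs ! i \<le> xs ! j" using srt that len by (simp add: sorted_wrt_iff_nth_less)
      then show ?thesis by (rule ant)
    qed
    have eq: "xs ! i = xs ! j" if "i < n" "j < n" for i j
    proof (cases i j rule: linorder_cases)
      case less then show ?thesis using lt[of i j] that by simp
    next
      case equal then show ?thesis by simp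
    next
      case greater then show ?thesis using lt[of j i] that by simp
    qed
    have ne: "xs \<noteq> []" using len n1 by auto
    have Ic: "Icube xs = {butlast xs}"
    proof (intro equalityI subsetI)
      fix ys assume "ys \<in> Icube xs"
      then have l: "length ys = n - 1" and c: "\<forall>i<length ys. xs ! i \<le> ys ! i \<and> ys ! i \<le> xs ! Suc i"
        using len by (auto simp: Icube_def)
      have "ys = butlast xs"
      proof (rule nth_equalityI)
        show "length ys = length (butlast xs)" using l len by simp
        fix k assume k: "k < length ys"
        then have "xs ! k \<le> ys ! k" using c by blast
        then have "xs ! k = ys ! k" by (rule ant)
        then show "ys ! k = butlast xs ! k" using k l len by (simp add: nth_butlast)
      qed
      then show "ys \<in> {butlast xs}" by simp
    next
      fix ys assume "ys \<in> {butlast xs}"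
      then have y: "ys = butlast xs" by simp
      show "ys \<in> Icube xs"
        unfolding Icube_def
      proof (intro CollectI conjI allI impI)
        show "length ys = length xs - 1" using y by simp
        fix k assume k: "k < length ys"
        then have k1: "k < n - 1" using y len by simp
        then have h1: "ys ! k = xs ! k" using y len by (simp add: nth_butlast)
        have h2: "xs ! k = xs ! Suc k" using eq[of k "Suc k"] k1 by simp
        show "xs ! k \<le> ys ! k" using h1 by simp
        show "ys ! k \<le> xs ! Suc k" using h1 h2 by simp
      qed
    qed
    have h: "hd xs # butlast xs = xs"
    proof (rule nth_equalityI)
      show "length (hd xs # butlast xs) = length xs" using len n1 by simp
      fix k assume "k < length (hd xs # butlast xs)"
      then have k: "k < n" using len n1 by simp
      show "(hd xs # butlast xs) ! k = xs ! k"
      proof (cases k)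
        case 0 then show ?thesis using ne by (simp add: hd_conv_nth)
      next
        case (Suc m) then show ?thesis using k len eq[of m k] by (simp add: nth_butlast)
      qed
    qed
    have l: "butlast xs @ [last xs] = xs" using ne by simp
    show ?thesis using True by (simp add: pf_mult_def Ic h l)
  qed
qed

theorem corollary1p3:
  fixes n :: nat
  assumes "locally_finite TYPE('a::order)"
    and "n \<ge> 3"
  shows "(\<exists>f \<in> pfia n. pf_mult n f (pf_mult n f f) \<noteq> pf_mult n (pf_mult n f f) (f :: 'a list \<Rightarrow> 'r::comm_ring_1))
         \<longleftrightarrow> \<not> is_antichain TYPE('a)"
proof
  assume "\<exists>f \<in> pfia n. pf_mult n f (pf_mult n f f) \<noteq> pf_mult n (pf_mult n f f) (f :: 'a list \<Rightarrow> 'r)"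
  then obtain f :: "'a list \<Rightarrow> 'r" where f: "pf_mult n f (pf_mult n f f) \<noteq> pf_mult n (pf_mult n f f) f" by blast
  show "\<not> is_antichain TYPE('a)"
  proof
    assume anti: "is_antichain TYPE('a)"
    have n1: "1 \<le> n" using assms by simp
    have "pf_mult n f (pf_mult n f f) = pf_mult n (pf_mult n f f) f"
      by (rule ext) (simp add: anti_mult[OF anti n1] mult.assoc)
    then show False using f by simp
  qed
next
  assume "\<not> is_antichain TYPE('a)"
  then obtain a b :: 'a where ab: "a < b" by (auto simp: is_antichain_def less_le)
  define f :: "'a list \<Rightarrow> 'r" where "f = (\<lambda>xs. if \<exists>j. 1 \<le> j \<and> j \<le> n \<and> xs = wd a b n j then 1 else 0)"
  have n3: "3 \<le> n" using assms by simp
  have neq0: "wd a b n 0 \<noteq> wd a b n j" if "1 \<le> j" for j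
  proof
    assume "wd a b n 0 = wd a b n j"
    then have "wd a b n 0 ! 0 = wd a b n j ! 0" by simp
    then show False using that n3 ab by (simp add: wd_nth)
  qed
  have fj: "f (wd a b n j) = 1" if "1 \<le> j" "j \<le> n" for j using that by (auto simp: f_def)
  have f0: "f (wd a b n 0) = 0" using neq0 by (auto simp: f_def)
  have supp: "\<forall>xs. f xs \<noteq> 0 \<longrightarrow> (\<exists>j. xs = wd a b n j)" by (auto simp: f_def)
  have fpf: "f \<in> pfia n" using wd_flags[OF ab] by (auto simp: f_def pfia_def)
  have ffb: "f (b # ys) = 0" for ys
  proof -
    have "b # ys \<noteq> wd a b n j" if "1 \<le> j" for j
    proof
      assume "b # ys = wd a b n j"
      then have "(b # ys) ! 0 = wd a b n j ! 0" by simp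
      then show False using that n3 ab by (simp add: wd_nth)
    qed
    then show ?thesis by (auto simp: f_def)
  qed
  have ff0: "pf_mult n f f (wd a b n 0) = 0"
  proof -
    have "length (wd a b n 0) \<noteq> 0" using n3 by simp
    then have "wd a b n 0 \<noteq> []" by (metis list.size(3))
    then have "hd (wd a b n 0) = b" using n3 by (simp add: hd_conv_nth wd_nth)
    then show ?thesis by (simp add: pf_mult_def ffb)
  qed
  have ff1: "pf_mult n f f (wd a b n 1) = 1"
    using key[OF assms(1) ab, of 1 n f f] supp n3 fj f0 by simp
  have ff2: "pf_mult n f f (wd a b n 2) = 2"
    using key[OF assms(1) ab, of 2 n f f] supp n3 fj by simp
  have L: "pf_mult n f (pf_mult n f f) (wd a b n 1) = 1"
    using key[OF assms(1) ab, of 1 n f "pf_mult n f f"] supp n3 fj ff1 ff0 by simp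
  have R: "pf_mult n (pf_mult n f f) f (wd a b n 1) = 2"
    using key[OF assms(1) ab, of 1 n "pf_mult n f f" f] supp n3 fj ff1 ff2 f0 by (simp add: numeral_2_eq_2)
  have "(1::'r) \<noteq> 2"
  proof
    assume "(1::'r) = 2"
    then have "(1::'r) - 1 = 2 - 1" by simp
    then show False by simp
  qed
  then have "pf_mult n f (pf_mult n f f) \<noteq> pf_mult n (pf_mult n f f) f"
    using L R by metis
  then show "\<exists>f \<in> pfia n. pf_mult n f (pf_mult n f f) \<noteq> pf_mult n (pf_mult n f f) (f :: 'a list \<Rightarrow> 'r)"
    using fpf by blast
qed

end
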